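(* Let $s>0$, $0\le r\le 1/4$, and $d:=s(2+s)$. Let $Z$ be a nonnegative random variable satisfying $Z\ge 2rs$ and $\mathbb{E}[Z]\le 2rs+r^2s^2$. Define $F(u):=\min\{1,48u^2\}$ for $u\ge0$. Then \[ \mathbb{E}\left[F\left(\frac{Z}{d}\right)\right]\le 48r^2. \] *)

theory Defs
  imports "HOL-Probability.Probability"
begin

definition Fcap :: "real \<Rightarrow> real" where
  "Fcap u = min 1 (48 * u^2)"

end

theory Submission
  imports Defs
begin

lemma Fcap_lin:
  fixes u u0 :: real
  assumes "0 \<le> u0" "u0 \<le> u"
  shows "Fcap u \<le> 48 * u0^2 + (96 * u0 + 7) * (u - u0)"
proof -
  define w where "w = u - u0"
  have w0: "w \<ge> 0" using assms w_def by simp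
  have u: "u = u0 + w" using w_def by simp
  show ?thesis
  proof (cases "48 * w^2 \<le> 1")
    case True
    have "w \<le> 7/48"
    proof (rule ccontr)
      assume "\<not> w \<le> 7/48"
      hence "w * w > 7/48 * (7/48)" by (intro mult_strict_mono) auto
      thus False using True by (simp add: power2_eq_square)
    qed
    hence "48 * w^2 \<le> 7 * w" using w0 by (simp add: power2_eq_square mult_right_mono)
      (metis mult.assoc mult_right_mono w0 mult.commute le_divide_eq_numeral1(1) zero_less_numeral)
    hence "48 * u^2 \<le> 48 * u0^2 + (96 * u0 + 7) * w"
      unfolding u by (simp add: power2_eq_square algebra_simps)
    thus ?thesis unfolding Fcap_def w_def by linarith
  next
    case False
    have "w > 1/7"
    proof (rule ccontr)
      assume "\<not> w > 1/7"
      hence "w * w \<le> 1/7 * (1/7)" using w0 by (intro mult_mono) auto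
      thus False using False by (simp add: power2_eq_square)
    qed
    hence "1 \<le> 48 * u0^2 + (96 * u0 + 7) * w"
    proof -
      have "0 \<le> u0 * w" using assms(1) w0 by simp
      moreover have "0 \<le> u0^2" by simp
      moreover have "48 * u0^2 + (96 * u0 + 7) * w = 48 * u0^2 + 96 * (u0 * w) + 7 * w"
        by (simp add: algebra_simps)
      ultimately show ?thesis using \<open>w > 1/7\<close> by linarith
    qed
    thus ?thesis unfolding Fcap_def w_def by linarith
  qed
qed

theorem lemmaA1:
  fixes M :: "'a measure" and Z :: "'a \<Rightarrow> real" and r s :: real
  assumes "prob_space M"
    and "Z \<in> borel_measurable M"
    and "integrable M Z"
    and "s > 0" and "0 \<le> r" and "r \<le> 1/4"
    and "\<forall>x\<in>space M. Z x \<ge> 0"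
    and "\<forall>x\<in>space M. Z x \<ge> 2 * r * s"
    and "(\<integral>x. Z x \<partial>M) \<le> 2 * r * s + r^2 * s^2"
  shows "(\<integral>x. Fcap (Z x / (s * (2 + s))) \<partial>M) \<le> 48 * r^2"
proof -
  interpret prob_space M by fact
  define d where "d = s * (2 + s)"
  define u0 where "u0 = 2 * r / (2 + s)"
  define K where "K = 96 * u0 + 7"
  have d0: "d > 0" using assms d_def by simp
  have u00: "u0 \<ge> 0" using assms u0_def by simp
  have u0d: "u0 = 2 * r * s / d" using assms d_def u0_def by simp
  have pt: "Fcap (Z x / d) \<le> 48 * u0^2 + K * (Z x / d - u0)" if "x \<in> space M" for x
  proof (rule Fcap_lin[OF u00, folded K_def])
    show "u0 \<le> Z x / d" unfolding u0d using assms(8) that d0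
      by (simp add: divide_right_mono)
  qed
  have intR: "integrable M (\<lambda>x. 48 * u0^2 + K * (Z x / d - u0))"
    using assms(3) by (intro Bochner_Integration.integrable_add integrable_mult_right
       Bochner_Integration.integrable_diff integrable_divide) auto
  have Fmeas: "(\<lambda>x. Fcap (Z x / d)) \<in> borel_measurable M"
    unfolding Fcap_def using assms(2) by measurable
  have Fint: "integrable M (\<lambda>x. Fcap (Z x / d))"
  proof (rule Bochner_Integration.integrable_bound[OF integrable_const[of 1] Fmeas])
    show "AE x in M. norm (Fcap (Z x / d)) \<le> norm (1::real)"
      unfolding Fcap_def by (intro AE_I2) (simp add: min_def)
  qed
  have "(\<integral>x. Fcap (Z x / d) \<partial>M) \<le> (\<integral>x. 48 * u0^2 + K * (Z x / d - u0) \<partial>M)"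
    by (rule integral_mono[OF Fint intR]) (use pt in auto)
  also have "\<dots> = 48 * u0^2 + K * ((\<integral>x. Z x \<partial>M) / d - u0)"
    using assms(3) by (simp add: Bochner_Integration.integral_add Bochner_Integration.integral_diff
        integrable_mult_right integrable_divide prob_space)
  also have "\<dots> \<le> 48 * u0^2 + K * ((2 * r * s + r^2 * s^2) / d - u0)"
    using assms(9) d0 u00 K_def by (intro add_left_mono mult_left_mono diff_right_mono divide_right_mono) auto
  also have "\<dots> \<le> 48 * r^2"
  proof -
    define t where "t = 2 + s"
    have t2: "t > 2" using assms t_def by simp
    have sn: "s \<noteq> 0" "2 + s \<noteq> 0" using assms(4) by auto
    have e0: "(2 * r * s + r^2 * s^2) / d = (2 * r + r^2 * s) / (2 + s)"
    proof -
      have h: "2 * r * s + r^2 * s^2 = s * (2 * r + r^2 * s)" by (simp add: power2_eq_square algebra_simps)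
      have "(2 * r * s + r^2 * s^2) / d = (s * (2 * r + r^2 * s)) / (s * (2 + s))"
        unfolding d_def h ..
      also have "\<dots> = (2 * r + r^2 * s) / (2 + s)" using sn(1) by simp
      finally show ?thesis .
    qed
    have e1: "(2 * r * s + r^2 * s^2) / d - u0 = r^2 * s / t"
      unfolding e0 u0_def t_def by (simp add: diff_divide_distrib[symmetric])
    have "48 * u0^2 + K * (r^2 * s / t) = r^2 * (192 / t^2 + 192 * r * (t - 2) / t^2 + 7 * (t-2) / t)"
    proof -
      have tn: "t \<noteq> 0" using t2 by simp
      have u0t: "u0 = 2 * r / t" unfolding u0_def t_def ..
      have st: "s = t - 2" unfolding t_def by simp
      show ?thesis unfolding K_def u0t st using tn by (simp add: field_simps power2_eq_square)
    qed
    also have "\<dots> \<le> r^2 * (192 / t^2 + 48 * (t - 2) / t^2 + 7 * (t-2) / t)"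
    proof -
      have "(192 * r) * (t - 2) \<le> 48 * (t - 2)" using assms t2 by (intro mult_right_mono) auto
      thus ?thesis using assms t2 by (intro mult_left_mono add_mono divide_right_mono) auto
    qed
    also have "\<dots> \<le> r^2 * 48"
    proof (rule mult_left_mono)
      have eq: "192 / t^2 + 48 * (t - 2) / t^2 + 7 * (t-2) / t = 96 / t^2 + 34 / t + 7"
        using t2 by (simp add: field_simps power2_eq_square)
      have t4: "(2::real)^2 \<le> t^2" using t2 by (intro power_mono) auto
      have "96 / t^2 \<le> 96 / 4" using t4 t2 by (intro divide_left_mono) auto
      moreover have "34 / t \<le> 34 / 2" using t2 by (intro divide_left_mono) auto
      ultimately show "192 / t^2 + 48 * (t - 2) / t^2 + 7 * (t-2) / t \<le> 48" unfolding eq by simp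
    qed simp
    finally show ?thesis unfolding e1 by (simp add: mult.commute)
  qed
  finally show ?thesis unfolding d_def .
qed

end
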